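(* Let $\mathbf F_N:=1-\Xi_N$. For every $P\in\mathcal M_\lambda$ there exists $Q\in\mathcal M_\lambda$ with $P\mathbf F_N=x_NQ$.
   Context: $N\ge2$, $q,s$ indeterminates, $K=\mathbb C(q,s)$. Operators act on the right, composed left to right. $\mathcal H_N(s)$ is generated by $T_1,\dots,T_{N-1}$ with $(T_i+1)(T_i-s)=0$ and the braid relations. $\lambda$ is a partition of $N$ (French convention, rows numbered bottom to top); $\mathrm{Tab}_\lambda$ = reverse standard tableaux (bijective fillings by $1,\dots,N$ strictly decreasing left to right in rows and bottom to top in columns); $\mathrm{CT}_{\mathbb T}[i]$ = column minus row of the cell containing $i$; $\mathbb T^{(i,j)}$ exchanges $i,j$. $V_\lambda$ has basis $\mathrm{Tab}_\lambda$ with right action $\mathbb TT_i=s\mathbb T$ if $i,i+1$ share a row, $-\mathbb T$ if they share a column, and if $i$ is in a higher row than $i+1$, with $m=\mathrm{CT}_{\mathbb T}[i+1]-\mathrm{CT}_{\mathbb T}[i]>0$, $\mathbb TT_i=\frac{s-1}{1-s^m}\mathbb T+\frac{s(1-s^{m+1})(1-s^{m-1})}{(1-s^m)^2}\mathbb T^{(i,i+1)}$; the remaining case is determined by this formula for $\mathbb T^{(i,i+1)}$ and the quadratic relation. $\mathcal M_\lambda=K[x_1,\dots,x_N]\otimes V_\lambda$; with $p^{s_i}$ = $p$ with $x_i,x_{i+1}$ exchanged: $(p\otimes u)\mathbf T_i=(1-s)\frac{x_{i+1}(p-p^{s_i})}{x_i-x_{i+1}}\otimes u+p^{s_i}\otimes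 uT_i$, $(p\otimes u)\mathbf w=p(qx_N,x_1,\dots,x_{N-1})\otimes uT_1\cdots T_{N-1}$, $\mathbf T_i^{-1}=s^{-1}(\mathbf T_i+1-s)$; $x_NQ$ means multiplication of the polynomial part by $x_N$. $\Xi_N=\mathbf T_{N-1}^{-1}\cdots\mathbf T_1^{-1}\mathbf w$. *)

theory Defs
  imports "HOL-Library.Poly_Mapping" "HOL-Computational_Algebra.Polynomial"
          "HOL-Computational_Algebra.Fraction_Field"
begin

text \<open>K = C(q)(s), the field of rational functions in two indeterminates q and s over C.\<close>
type_synonym K = "complex poly fract poly fract"

definition qK :: K where "qK = Fract [: Fract [:0, 1:] 1 :] 1"
definition sK :: K where "sK = Fract [:0, 1:] 1"

text \<open>Polynomials in the variables x_1, x_2, ... : exponent vectors are finitely supported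
  maps nat to nat (index i = variable x_i); polynomials are finitely supported maps
  from exponent vectors to K.\<close>
type_synonym mpoly = "(nat \<Rightarrow>\<^sub>0 nat) \<Rightarrow>\<^sub>0 K"

definition Var :: "nat \<Rightarrow> mpoly" where
  "Var i = Poly_Mapping.single (Poly_Mapping.single i 1) 1"

definition smult_mp :: "K \<Rightarrow> mpoly \<Rightarrow> mpoly" where
  "smult_mp c p = Poly_Mapping.single 0 c * p"

definition in_vars :: "nat \<Rightarrow> mpoly \<Rightarrow> bool" where
  "in_vars N p \<longleftrightarrow> (\<forall>a \<in> Poly_Mapping.keys p. Poly_Mapping.keys a \<subseteq> {1..N})"

definition ren_mon :: "(nat \<Rightarrow> nat) \<Rightarrow> (nat \<Rightarrow>\<^sub>0 nat) \<Rightarrow> (nat \<Rightarrow>\<^sub>0 nat)" where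
  "ren_mon f a = (\<Sum>j \<in> Poly_Mapping.keys a. Poly_Mapping.single (f j) (Poly_Mapping.lookup a j))"

definition swapidx :: "nat \<Rightarrow> nat \<Rightarrow> nat" where
  "swapidx i j = (if j = i then Suc i else if j = Suc i then i else j)"

definition swap_vars :: "nat \<Rightarrow> mpoly \<Rightarrow> mpoly" where
  "swap_vars i p = (\<Sum>a \<in> Poly_Mapping.keys p.
      Poly_Mapping.single (ren_mon (swapidx i) a) (Poly_Mapping.lookup p a))"

definition divdiff :: "nat \<Rightarrow> mpoly \<Rightarrow> mpoly" where
  "divdiff i p = (THE r. r * (Var i - Var (Suc i)) = p - swap_vars i p)"

text \<open>p(q x_N, x_1, ..., x_(N-1)): x_1 maps to q x_N and x_j to x_(j-1) for j >= 2\<close>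
definition shiftidx :: "nat \<Rightarrow> nat \<Rightarrow> nat" where
  "shiftidx N j = (if j = 1 then N else j - 1)"

definition wsubst :: "nat \<Rightarrow> mpoly \<Rightarrow> mpoly" where
  "wsubst N p = (\<Sum>a \<in> Poly_Mapping.keys p.
      Poly_Mapping.single (ren_mon (shiftidx N) a)
        (Poly_Mapping.lookup p a * qK ^ (Poly_Mapping.lookup a 1)))"

text \<open>A partition of N: weakly decreasing list of positive parts summing to N.
  Row r (0-based, bottom to top, French convention) has lam ! r cells.\<close>
definition is_partition :: "nat \<Rightarrow> nat list \<Rightarrow> bool" where
  "is_partition N lam \<longleftrightarrow> sorted_wrt (\<ge>) lam \<and> (\<forall>k \<in> set lam. 0 < k) \<and> sum_list lam = N"

definition cells :: "nat list \<Rightarrow> (nat \<times> nat) set" where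
  "cells lam = {(r, c). r < length lam \<and> c < lam ! r}"

text \<open>A tableau is a list T of cells of length N; the entry i (1 <= i <= N) sits in cell T ! (i-1).\<close>
type_synonym tableau = "(nat \<times> nat) list"

definition cell :: "tableau \<Rightarrow> nat \<Rightarrow> nat \<times> nat" where
  "cell T i = T ! (i - 1)"

definition Tab :: "nat \<Rightarrow> nat list \<Rightarrow> tableau set" where
  "Tab N lam = {T. length T = N \<and> distinct T \<and> set T = cells lam \<and>
     (\<forall>i \<in> {1..N}. \<forall>j \<in> {1..N}.
        (fst (cell T i) = fst (cell T j) \<and> snd (cell T i) < snd (cell T j) \<longrightarrow> j < i) \<and>
        (snd (cell T i) = snd (cell T j) \<and> fst (cell T i) < fst (cell T j) \<longrightarrow> j < i))}"

definition CT :: "tableau \<Rightarrow> nat \<Rightarrow> int" where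
  "CT T i = int (snd (cell T i)) - int (fst (cell T i))"

definition exch :: "tableau \<Rightarrow> nat \<Rightarrow> nat \<Rightarrow> tableau" where
  "exch T i j = T[i - 1 := T ! (j - 1), j - 1 := T ! (i - 1)]"

type_synonym vec = "tableau \<Rightarrow> K"

text \<open>The image T T_i of the basis vector T.  The last case (i in a lower row than i+1)
  is the one forced by the formula for T^{(i,i+1)} together with the quadratic relation.\<close>
definition heckeB :: "nat \<Rightarrow> tableau \<Rightarrow> vec" where
  "heckeB i T =
    (let a = cell T i; b = cell T (Suc i); T' = exch T i (Suc i);
         m = CT T (Suc i) - CT T i; s = sK in
     if fst a = fst b then (\<lambda>U. if U = T then s else 0)
     else if snd a = snd b then (\<lambda>U. if U = T then -1 else 0)
     else if fst b < fst a then
       (\<lambda>U. if U = T then (s - 1) / (1 - s powi m)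
            else if U = T' then s * (1 - s powi (m + 1)) * (1 - s powi (m - 1)) / (1 - s powi m)\<^sup>2
            else 0)
     else
       (\<lambda>U. if U = T then (s - 1) / (1 - s powi m)
            else if U = T' then 1
            else 0))"

definition vact :: "nat \<Rightarrow> nat list \<Rightarrow> nat \<Rightarrow> vec \<Rightarrow> vec" where
  "vact N lam i v = (\<lambda>U. \<Sum>T \<in> Tab N lam. v T * heckeB i T U)"

text \<open>u T_1 T_2 ... T_(N-1) (right action, T_1 applied first)\<close>
definition vchain :: "nat \<Rightarrow> nat list \<Rightarrow> vec \<Rightarrow> vec" where
  "vchain N lam v = fold (vact N lam) [1..<N] v"

definition basis_vec :: "tableau \<Rightarrow> vec" where
  "basis_vec T = (\<lambda>U. if U = T then 1 else 0)"

text \<open>An element is written uniquely as the sum over T in Tab of P T tensor T.\<close>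
type_synonym melt = "tableau \<Rightarrow> mpoly"

definition inM :: "nat \<Rightarrow> nat list \<Rightarrow> melt \<Rightarrow> bool" where
  "inM N lam P \<longleftrightarrow> (\<forall>U. U \<notin> Tab N lam \<longrightarrow> P U = 0) \<and> (\<forall>U. in_vars N (P U))"

definition opT :: "nat \<Rightarrow> nat list \<Rightarrow> nat \<Rightarrow> melt \<Rightarrow> melt" where
  "opT N lam i P = (\<lambda>U. if U \<in> Tab N lam then
       smult_mp (1 - sK) (Var (Suc i) * divdiff i (P U))
       + (\<Sum>T \<in> Tab N lam. smult_mp (heckeB i T U) (swap_vars i (P T)))
     else 0)"

definition opTinv :: "nat \<Rightarrow> nat list \<Rightarrow> nat \<Rightarrow> melt \<Rightarrow> melt" where
  "opTinv N lam i P = (\<lambda>U. smult_mp (inverse sK) (opT N lam i P U + smult_mp (1 - sK) (P U)))"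

definition opW :: "nat \<Rightarrow> nat list \<Rightarrow> melt \<Rightarrow> melt" where
  "opW N lam P = (\<lambda>U. \<Sum>T \<in> Tab N lam.
       smult_mp (vchain N lam (basis_vec T) U) (wsubst N (P T)))"

text \<open>Xi_N = T_(N-1)^{-1} ... T_1^{-1} w, composed left to right (T_(N-1)^{-1} acts first)\<close>
definition opXi :: "nat \<Rightarrow> nat list \<Rightarrow> melt \<Rightarrow> melt" where
  "opXi N lam P = opW N lam (fold (opTinv N lam) (rev [1..<N]) P)"

definition opF :: "nat \<Rightarrow> nat list \<Rightarrow> melt \<Rightarrow> melt" where
  "opF N lam P = (\<lambda>U. P U - opXi N lam P U)"

end

theory Submission
  imports Defs
begin


lemma lookup_smult_mp [simp]: "Poly_Mapping.lookup (smult_mp c p) a = c * Poly_Mapping.lookup p a"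
  unfolding smult_mp_def mult_map_scale_conv_mult[symmetric]
  by (simp add: Poly_Mapping.map.rep_eq when_def)

lemma smult_mp_eqI: "smult_mp c p = Poly_Mapping.map ((*) c) p"
  by (simp add: smult_mp_def mult_map_scale_conv_mult)

lemma smult_mp_add [simp]: "smult_mp c (p + q) = smult_mp c p + smult_mp c q"
  by (simp add: smult_mp_def algebra_simps)
lemma smult_mp_add2: "smult_mp (c + d) p = smult_mp c p + smult_mp d p"
  by (simp add: smult_mp_def single_add algebra_simps)
lemma smult_mp_diff [simp]: "smult_mp c (p - q) = smult_mp c p - smult_mp c q"
  by (simp add: smult_mp_def algebra_simps)
lemma smult_mp_diff2: "smult_mp (c - d) p = smult_mp c p - smult_mp d p"
  by (simp add: smult_mp_def single_diff algebra_simps)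
lemma smult_mp_minus [simp]: "smult_mp c (- p) = - smult_mp c p"
  by (simp add: smult_mp_def algebra_simps)
lemma smult_mp_smult [simp]: "smult_mp c (smult_mp d p) = smult_mp (c * d) p"
  by (simp add: smult_mp_def mult_single mult.assoc[symmetric])
lemma smult_mp_0 [simp]: "smult_mp 0 p = 0" by (simp add: smult_mp_def)
lemma smult_mp_0r [simp]: "smult_mp c 0 = 0" by (simp add: smult_mp_def)
lemma smult_mp_1 [simp]: "smult_mp 1 p = p" by (simp add: smult_mp_def)
lemma smult_mp_multl: "smult_mp c p * q = smult_mp c (p * q)"
  by (simp add: smult_mp_def mult.assoc)
lemma smult_mp_multr: "p * smult_mp c q = smult_mp c (p * q)"
  by (simp add: smult_mp_def algebra_simps)
lemma smult_mp_sum: "smult_mp c (sum f S) = (\<Sum>x\<in>S. smult_mp c (f x))"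
  by (simp add: smult_mp_def sum_distrib_left)
lemma smult_mp_sum2: "smult_mp (sum f S) p = (\<Sum>x\<in>S. smult_mp (f x) p)"
  by (induction S rule: infinite_finite_induct) (auto simp: smult_mp_add2)
lemma smult_mp_single: "smult_mp c (Poly_Mapping.single a d) = Poly_Mapping.single a (c * d)"
  by (simp add: smult_mp_def mult_single)
lemma keys_smult_mp: "Poly_Mapping.keys (smult_mp c p) \<subseteq> Poly_Mapping.keys p"
  by (auto simp: in_keys_iff)

definition lin :: "((nat \<Rightarrow>\<^sub>0 nat) \<Rightarrow> mpoly) \<Rightarrow> mpoly \<Rightarrow> mpoly" where
  "lin g p = (\<Sum>a\<in>Poly_Mapping.keys p. smult_mp (Poly_Mapping.lookup p a) (g a))"

lemma lin_superset:
  assumes "finite S" "Poly_Mapping.keys p \<subseteq> S"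
  shows "lin g p = (\<Sum>a\<in>S. smult_mp (Poly_Mapping.lookup p a) (g a))"
  unfolding lin_def
  by (rule sum.mono_neutral_left) (use assms in \<open>auto simp: in_keys_iff\<close>)

lemma lin_zero [simp]: "lin g 0 = 0" by (simp add: lin_def)

lemma lin_add: "lin g (p + q) = lin g p + lin g q"
proof -
  have S: "finite (Poly_Mapping.keys p \<union> Poly_Mapping.keys q)" by simp
  show ?thesis
    using lin_superset[OF S, of "p+q" g] lin_superset[OF S, of p g] lin_superset[OF S, of q g]
    by (simp add: keys_add lookup_add smult_mp_add2 sum.distrib)
qed

lemma lin_smult: "lin g (smult_mp c p) = smult_mp c (lin g p)"
  using lin_superset[of "Poly_Mapping.keys p" "smult_mp c p" g] keys_smult_mp[of c p]
  by (simp add: lin_def smult_mp_sum)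

lemma lin_minus: "lin g (- p) = - lin g p"
  using lin_add[of g p "-p"] by (simp add: eq_neg_iff_add_eq_0 add.commute)

lemma lin_diff: "lin g (p - q) = lin g p - lin g q"
  using lin_add[of g p "-q"] lin_minus[of g q] by simp

lemma lin_sum: "lin g (sum f S) = (\<Sum>x\<in>S. lin g (f x))"
  by (induction S rule: infinite_finite_induct) (auto simp: lin_add)

lemma lin_single: "lin g (Poly_Mapping.single a c) = smult_mp c (g a)"
  by (cases "c = 0") (auto simp: lin_def)

lemma lin_cong: "(\<And>a. a \<in> Poly_Mapping.keys p \<Longrightarrow> g a = h a) \<Longrightarrow> lin g p = lin h p"
  by (simp add: lin_def)

lemma lin_gadd: "lin (\<lambda>a. g a + h a) p = lin g p + lin h p"
  by (simp add: lin_def sum.distrib)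
lemma lin_gdiff: "lin (\<lambda>a. g a - h a) p = lin g p - lin h p"
  by (simp add: lin_def sum_subtractf)
lemma lin_gmult: "lin (\<lambda>a. r * g a) p = r * lin g p"
  by (simp add: lin_def sum_distrib_left smult_mp_multr)
lemma lin_gzero: "lin (\<lambda>a. 0) p = 0"
  by (simp add: lin_def)

lemma expansion: "lin (\<lambda>a. Poly_Mapping.single a 1) p = p"
proof (rule poly_mapping_eqI)
  fix k
  have "Poly_Mapping.lookup (lin (\<lambda>a. Poly_Mapping.single a 1) p) k
      = (\<Sum>a\<in>Poly_Mapping.keys p. Poly_Mapping.lookup p a * (1 when a = k))"
    by (simp add: lin_def lookup_sum lookup_single)
  also have "\<dots> = Poly_Mapping.lookup p k"
    by (cases "k \<in> Poly_Mapping.keys p") (auto simp: when_def in_keys_iff if_distrib cong: if_cong)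
  finally show "Poly_Mapping.lookup (lin (\<lambda>a. Poly_Mapping.single a 1) p) k = Poly_Mapping.lookup p k" .
qed

lemma expansion2: "(p::mpoly) = (\<Sum>a\<in>Poly_Mapping.keys p. Poly_Mapping.single a (Poly_Mapping.lookup p a))"
  using expansion[of p] by (simp add: lin_def smult_mp_single)

lemma lin_lin: "lin g (lin h p) = lin (\<lambda>a. lin g (h a)) p"
proof -
  have "lin g (lin h p) = (\<Sum>a\<in>Poly_Mapping.keys p. lin g (smult_mp (Poly_Mapping.lookup p a) (h a)))"
    by (simp only: lin_def[of h] lin_sum)
  then show ?thesis by (simp add: lin_smult lin_def[of "\<lambda>a. lin g (h a)"])
qed

lemma lin_mult:
  assumes "\<And>a b. g (a + b) = g a * g b"
  shows "lin g (p * q) = lin g p * lin g q"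
proof -
  have pq: "p * q = (\<Sum>a\<in>Poly_Mapping.keys p. \<Sum>b\<in>Poly_Mapping.keys q. Poly_Mapping.single (a + b) (Poly_Mapping.lookup p a * Poly_Mapping.lookup q b))"
    apply (subst expansion2[of p]) apply (subst expansion2[of q])
    by (simp add: sum_distrib_left sum_distrib_right mult_single sum.swap[of _ "Poly_Mapping.keys q"])
  have "lin g (p * q) = (\<Sum>a\<in>Poly_Mapping.keys p. \<Sum>b\<in>Poly_Mapping.keys q. smult_mp (Poly_Mapping.lookup p a * Poly_Mapping.lookup q b) (g a * g b))"
    by (simp add: pq lin_sum lin_single assms)
  also have "\<dots> = lin g p * lin g q"
    by (simp add: lin_def sum_distrib_left sum_distrib_right smult_mp_multl smult_mp_multr mult.commute
        sum.swap[of _ "Poly_Mapping.keys q"])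
  finally show ?thesis .
qed

lemma keys_lin: "Poly_Mapping.keys (lin g p) \<subseteq> (\<Union>a\<in>Poly_Mapping.keys p. Poly_Mapping.keys (g a))"
  unfolding lin_def using keys_sum keys_smult_mp by fastforce


lemma pm_expansion: "(a::'a \<Rightarrow>\<^sub>0 'b::comm_monoid_add) = (\<Sum>j\<in>Poly_Mapping.keys a. Poly_Mapping.single j (Poly_Mapping.lookup a j))"
proof (rule poly_mapping_eqI)
  fix k
  show "Poly_Mapping.lookup a k = Poly_Mapping.lookup (\<Sum>j\<in>Poly_Mapping.keys a. Poly_Mapping.single j (Poly_Mapping.lookup a j)) k"
    by (cases "k \<in> Poly_Mapping.keys a") (auto simp: lookup_sum lookup_single when_def in_keys_iff if_distrib cong: if_cong)
qed

lemma ren_mon_superset: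
  assumes "finite S" "Poly_Mapping.keys a \<subseteq> S"
  shows "ren_mon f a = (\<Sum>j\<in>S. Poly_Mapping.single (f j) (Poly_Mapping.lookup a j))"
  unfolding ren_mon_def
  by (rule sum.mono_neutral_left) (use assms in \<open>auto simp: in_keys_iff\<close>)

lemma ren_mon_zero [simp]: "ren_mon f 0 = 0" by (simp add: ren_mon_def)

lemma ren_mon_add: "ren_mon f (a + b) = ren_mon f a + ren_mon f b"
proof -
  have S: "finite (Poly_Mapping.keys a \<union> Poly_Mapping.keys b)" by simp
  show ?thesis
    using ren_mon_superset[OF S, of "a+b" f] ren_mon_superset[OF S, of a f] ren_mon_superset[OF S, of b f]
    by (simp add: keys_add lookup_add single_add sum.distrib)
qed

lemma ren_mon_sum: "ren_mon f (sum g S) = (\<Sum>x\<in>S. ren_mon f (g x))"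
  by (induction S rule: infinite_finite_induct) (auto simp: ren_mon_add)

lemma ren_mon_single [simp]: "ren_mon f (Poly_Mapping.single j n) = Poly_Mapping.single (f j) n"
  by (cases "n = 0") (auto simp: ren_mon_def)

lemma ren_mon_comp: "ren_mon f (ren_mon g a) = ren_mon (f \<circ> g) a"
  by (simp add: ren_mon_def[of g] ren_mon_sum) (simp add: ren_mon_def)

lemma ren_mon_id: "(\<And>j. j \<in> Poly_Mapping.keys a \<Longrightarrow> f j = j) \<Longrightarrow> ren_mon f a = a"
  by (simp add: ren_mon_def pm_expansion[of a, symmetric] cong: sum.cong)

lemma lookup_ren_mon: "Poly_Mapping.lookup (ren_mon f a) k = (\<Sum>j\<in>Poly_Mapping.keys a. if f j = k then Poly_Mapping.lookup a j else 0)"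
  by (simp add: ren_mon_def lookup_sum lookup_single when_def)

lemma lookup_ren_mon_uniq:
  assumes "\<And>j. j \<in> Poly_Mapping.keys a \<Longrightarrow> f j = k \<longleftrightarrow> j = j0"
  shows "Poly_Mapping.lookup (ren_mon f a) k = Poly_Mapping.lookup a j0"
proof -
  have "Poly_Mapping.lookup (ren_mon f a) k = (\<Sum>j\<in>Poly_Mapping.keys a. if j = j0 then Poly_Mapping.lookup a j else 0)"
    unfolding lookup_ren_mon using assms by (intro sum.cong) auto
  also have "\<dots> = Poly_Mapping.lookup a j0"
    by (cases "j0 \<in> Poly_Mapping.keys a") (auto simp: in_keys_iff)
  finally show ?thesis .
qed

lemma keys_ren_mon: "Poly_Mapping.keys (ren_mon f a) \<subseteq> f ` Poly_Mapping.keys a"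
  unfolding ren_mon_def by (rule order_trans[OF keys_sum]) auto

definition mon :: "(nat \<Rightarrow>\<^sub>0 nat) \<Rightarrow> mpoly" where "mon a = Poly_Mapping.single a 1"

lemma mon_add: "mon (a + b) = mon a * mon b" by (simp add: mon_def mult_single)

lemma swap_vars_lin: "swap_vars i p = lin (\<lambda>a. mon (ren_mon (swapidx i) a)) p"
  by (simp add: swap_vars_def lin_def smult_mp_single mon_def)

lemma wsubst_lin: "wsubst N p = lin (\<lambda>a. Poly_Mapping.single (ren_mon (shiftidx N) a) (qK ^ Poly_Mapping.lookup a 1)) p"
  by (simp add: wsubst_def lin_def smult_mp_single)

definition ev :: "nat \<Rightarrow> mpoly \<Rightarrow> mpoly" where
  "ev j = lin (\<lambda>a. if Poly_Mapping.lookup a j = 0 then mon a else 0)"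

lemma swap_mult: "swap_vars i (p * q) = swap_vars i p * swap_vars i q"
  unfolding swap_vars_lin by (rule lin_mult) (simp add: ren_mon_add mon_add)

lemma ev_mult: "ev j (p * q) = ev j p * ev j q"
  unfolding ev_def by (rule lin_mult) (auto simp: lookup_add mon_add)

lemma mon_lookup: "Poly_Mapping.lookup (mon a) b = (if a = b then 1 else 0)"
  by (simp add: mon_def lookup_single when_def)

lemma Var_mon: "Var i = mon (Poly_Mapping.single i 1)" by (simp add: Var_def mon_def)

lemma lin_mon: "lin g (mon a) = g a" by (simp add: mon_def lin_single)

lemma ev_Var_same [simp]: "ev j (Var j) = 0"
  by (simp add: ev_def Var_mon lin_mon)
lemma ev_Var_other: "k \<noteq> j \<Longrightarrow> ev j (Var k) = Var k"
  by (simp add: ev_def Var_mon lin_mon lookup_single)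

lemma swap_Var: "swap_vars i (Var j) = Var (swapidx i j)"
  by (simp add: swap_vars_lin Var_mon lin_mon)

lemma smult_mp_mon: "smult_mp c (mon a) = Poly_Mapping.single a c"
  by (simp add: mon_def smult_mp_single)

lemma ev_add: "ev j (p + q) = ev j p + ev j q" by (simp add: ev_def lin_add)
lemma ev_diff: "ev j (p - q) = ev j p - ev j q" by (simp add: ev_def lin_diff)
lemma ev_minus: "ev j (- p) = - ev j p" by (simp add: ev_def lin_minus)
lemma ev_smult: "ev j (smult_mp c p) = smult_mp c (ev j p)" by (simp add: ev_def lin_smult)
lemma ev_sum: "ev j (sum f S) = (\<Sum>x\<in>S. ev j (f x))" by (simp add: ev_def lin_sum)
lemma ev_zero [simp]: "ev j 0 = 0" by (simp add: ev_def)

lemma swap_add: "swap_vars i (p + q) = swap_vars i p + swap_vars i q" by (simp add: swap_vars_lin lin_add)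
lemma swap_diff: "swap_vars i (p - q) = swap_vars i p - swap_vars i q" by (simp add: swap_vars_lin lin_diff)
lemma swap_smult: "swap_vars i (smult_mp c p) = smult_mp c (swap_vars i p)" by (simp add: swap_vars_lin lin_smult)
lemma swap_sum: "swap_vars i (sum f S) = (\<Sum>x\<in>S. swap_vars i (f x))" by (simp add: swap_vars_lin lin_sum)
lemma swap_zero [simp]: "swap_vars i 0 = 0" by (simp add: swap_vars_lin)
lemma swap_one [simp]: "swap_vars i 1 = 1"
  using lin_mon[of "\<lambda>a. mon (ren_mon (swapidx i) a)" 0] by (simp add: swap_vars_lin mon_def)

lemma wsubst_add: "wsubst N (p + q) = wsubst N p + wsubst N q" by (simp add: wsubst_lin lin_add)
lemma wsubst_smult: "wsubst N (smult_mp c p) = smult_mp c (wsubst N p)" by (simp add: wsubst_lin lin_smult)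
lemma wsubst_sum: "wsubst N (sum f S) = (\<Sum>x\<in>S. wsubst N (f x))" by (simp add: wsubst_lin lin_sum)

lemma lin_expansion_mon: "lin mon p = p"
proof -
  have "mon = (\<lambda>a. Poly_Mapping.single a 1)" by (rule ext) (simp add: mon_def)
  then show ?thesis using expansion[of p] by simp
qed

definition dd :: "nat \<Rightarrow> mpoly" where "dd i = Var i - Var (Suc i)"

lemma dd_nz: "dd i \<noteq> 0"
proof
  assume "dd i = 0"
  then have "Poly_Mapping.lookup (dd i) (Poly_Mapping.single i 1) = 0" by simp
  moreover have "Poly_Mapping.single i (1::nat) \<noteq> Poly_Mapping.single (Suc i) 1"
    by (metis lookup_single_eq lookup_single_not_eq n_not_Suc_n one_neq_zero)
  ultimately show False by (simp add: dd_def Var_mon mon_lookup lookup_minus)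
qed

definition dvs :: "nat \<Rightarrow> mpoly \<Rightarrow> bool" where
  "dvs i p \<longleftrightarrow> (\<exists>r. r * dd i = p - swap_vars i p)"

lemma dvs_add: "dvs i p \<Longrightarrow> dvs i q \<Longrightarrow> dvs i (p + q)"
proof -
  assume "dvs i p" "dvs i q"
  then obtain r1 r2 where "r1 * dd i = p - swap_vars i p" "r2 * dd i = q - swap_vars i q"
    unfolding dvs_def by blast
  then have "(r1 + r2) * dd i = (p + q) - swap_vars i (p + q)"
    by (simp add: swap_add distrib_right)
  then show ?thesis unfolding dvs_def by blast
qed

lemma dvs_zero: "dvs i 0" unfolding dvs_def by (rule exI[of _ 0]) simp

lemma dvs_sum: "(\<And>x. x \<in> S \<Longrightarrow> dvs i (f x)) \<Longrightarrow> dvs i (sum f S)"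
  by (induction S rule: infinite_finite_induct) (auto intro: dvs_add dvs_zero)

lemma dvs_smult: "dvs i p \<Longrightarrow> dvs i (smult_mp c p)"
proof -
  assume "dvs i p"
  then obtain r where "r * dd i = p - swap_vars i p" unfolding dvs_def by blast
  then have "smult_mp c r * dd i = smult_mp c p - swap_vars i (smult_mp c p)"
    by (simp add: smult_mp_multl swap_smult)
  then show ?thesis unfolding dvs_def by blast
qed

lemma dvs_mult: "dvs i p \<Longrightarrow> dvs i q \<Longrightarrow> dvs i (p * q)"
proof -
  assume "dvs i p" "dvs i q"
  then obtain r1 r2 where r1: "r1 * dd i = p - swap_vars i p" and r2: "r2 * dd i = q - swap_vars i q"
    unfolding dvs_def by blast
  have "(r1 * q + swap_vars i p * r2) * dd i = p * q - swap_vars i (p * q)"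
  proof -
    have "(r1 * q + swap_vars i p * r2) * dd i = (r1 * dd i) * q + swap_vars i p * (r2 * dd i)"
      by (simp add: algebra_simps)
    also have "\<dots> = p * q - swap_vars i p * swap_vars i q"
      by (simp add: r1 r2 algebra_simps)
    finally show ?thesis by (simp add: swap_mult)
  qed
  then show ?thesis unfolding dvs_def by blast
qed

lemma dvs_one: "dvs i 1" unfolding dvs_def by (rule exI[of _ 0]) simp

lemma dvs_power: "dvs i p \<Longrightarrow> dvs i (p ^ n)"
  by (induction n) (auto intro: dvs_mult dvs_one)

lemma dvs_prod: "(\<And>x. x \<in> S \<Longrightarrow> dvs i (f x)) \<Longrightarrow> dvs i (prod f S)"
  by (induction S rule: infinite_finite_induct) (auto intro: dvs_mult dvs_one)

lemma swapidx_simps [simp]: "swapidx i i = Suc i" "swapidx i (Suc i) = i"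
  "j \<noteq> i \<Longrightarrow> j \<noteq> Suc i \<Longrightarrow> swapidx i j = j"
  by (auto simp: swapidx_def)

lemma dvs_Var: "dvs i (Var j)"
  unfolding dvs_def
proof (cases "j = i \<or> j = Suc i")
  case True
  then show "\<exists>r. r * dd i = Var j - swap_vars i (Var j)"
    by (auto simp: swap_Var dd_def intro: exI[of _ 1] exI[of _ "-1"])
next
  case False
  then show "\<exists>r. r * dd i = Var j - swap_vars i (Var j)"
    by (auto simp: swap_Var intro: exI[of _ 0])
qed

lemma mon_zero: "mon 0 = 1" by (simp add: mon_def)

lemma mon_sum: "mon (sum f S) = (\<Prod>x\<in>S. mon (f x))"
  by (induction S rule: infinite_finite_induct) (auto simp: mon_zero mon_add)

lemma mon_single: "mon (Poly_Mapping.single j n) = Var j ^ n"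
proof (induction n)
  case 0 then show ?case by (simp add: mon_zero)
next
  case (Suc n)
  have "Poly_Mapping.single j (Suc n) = Poly_Mapping.single j 1 + Poly_Mapping.single j n"
    by (simp add: single_add[symmetric])
  then show ?case using Suc by (simp add: mon_add Var_mon)
qed

lemma mon_prod_Var: "mon a = (\<Prod>j\<in>Poly_Mapping.keys a. Var j ^ Poly_Mapping.lookup a j)"
  by (subst pm_expansion[of a]) (simp add: mon_sum mon_single)

lemma dvs_all: "dvs i p"
proof -
  have m: "dvs i (mon a)" for a
    by (simp add: mon_prod_Var dvs_prod dvs_power dvs_Var)
  have "p = (\<Sum>a\<in>Poly_Mapping.keys p. smult_mp (Poly_Mapping.lookup p a) (mon a))"
    using lin_expansion_mon[of p] by (simp add: lin_def)
  moreover have "dvs i (\<Sum>a\<in>Poly_Mapping.keys p. smult_mp (Poly_Mapping.lookup p a) (mon a))"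
    by (intro dvs_sum dvs_smult m)
  ultimately show ?thesis by simp
qed

lemma divdiff_eq: "divdiff i p * dd i = p - swap_vars i p"
proof -
  obtain r where r: "r * dd i = p - swap_vars i p" using dvs_all[of i p] unfolding dvs_def by blast
  have u: "r' = r" if "r' * dd i = p - swap_vars i p" for r'
    using that r dd_nz[of i] mult_right_cancel by metis
  have "\<exists>!r. r * (Var i - Var (Suc i)) = p - swap_vars i p"
    using r u unfolding dd_def by blast
  then show ?thesis unfolding divdiff_def dd_def by (rule theI')
qed


lemma keys_add_nat: "Poly_Mapping.keys (a + b :: nat \<Rightarrow>\<^sub>0 nat) = Poly_Mapping.keys a \<union> Poly_Mapping.keys b"
  by (auto simp: in_keys_iff lookup_add)

lemma keys_diff_sub: "Poly_Mapping.keys (p - q :: mpoly) \<subseteq> Poly_Mapping.keys p \<union> Poly_Mapping.keys q"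
  by (auto simp: in_keys_iff lookup_minus)

lemma in_vars_lin: "(\<And>a. a \<in> Poly_Mapping.keys p \<Longrightarrow> in_vars N (g a)) \<Longrightarrow> in_vars N (lin g p)"
  unfolding in_vars_def using keys_lin[of g p] by blast

lemma in_vars_zero [simp]: "in_vars N 0" by (simp add: in_vars_def)
lemma in_vars_add: "in_vars N p \<Longrightarrow> in_vars N q \<Longrightarrow> in_vars N (p + q)"
  unfolding in_vars_def using keys_add[of p q] by blast
lemma in_vars_diff: "in_vars N p \<Longrightarrow> in_vars N q \<Longrightarrow> in_vars N (p - q)"
  unfolding in_vars_def using keys_diff_sub[of p q] by blast
lemma in_vars_smult: "in_vars N p \<Longrightarrow> in_vars N (smult_mp c p)"
  unfolding in_vars_def using keys_smult_mp[of c p] by blast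
lemma in_vars_sum: "(\<And>x. x \<in> S \<Longrightarrow> in_vars N (f x)) \<Longrightarrow> in_vars N (sum f S)"
  by (induction S rule: infinite_finite_induct) (auto intro: in_vars_add)
lemma in_vars_mult: "in_vars N p \<Longrightarrow> in_vars N q \<Longrightarrow> in_vars N (p * q)"
  unfolding in_vars_def using keys_mult[of p q] by (fastforce simp: keys_add_nat)
lemma in_vars_mon: "in_vars N (mon a) \<longleftrightarrow> Poly_Mapping.keys a \<subseteq> {1..N}"
  by (simp add: in_vars_def mon_def)
lemma in_vars_Var: "1 \<le> j \<Longrightarrow> j \<le> N \<Longrightarrow> in_vars N (Var j)"
  by (simp add: Var_mon in_vars_mon)
lemma in_vars_single: "Poly_Mapping.keys a \<subseteq> {1..N} \<Longrightarrow> in_vars N (Poly_Mapping.single a c)"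
  by (simp add: in_vars_def)

lemma in_vars_keys: "in_vars N p \<Longrightarrow> a \<in> Poly_Mapping.keys p \<Longrightarrow> j \<in> Poly_Mapping.keys a \<Longrightarrow> 1 \<le> j \<and> j \<le> N"
proof -
  assume "in_vars N p" "a \<in> Poly_Mapping.keys p" "j \<in> Poly_Mapping.keys a"
  then have "j \<in> {1..N}" unfolding in_vars_def by blast
  then show ?thesis by simp
qed

lemma shift_range: "1 \<le> x \<Longrightarrow> x \<le> N \<Longrightarrow> 1 \<le> N \<Longrightarrow> shiftidx N x \<in> {1..N}"
  by (auto simp: shiftidx_def)

lemma in_vars_swap:
  assumes "1 \<le> i" "i < N" "in_vars N p"
  shows "in_vars N (swap_vars i p)"
  unfolding swap_vars_lin
proof (rule in_vars_lin)
  fix a assume a: "a \<in> Poly_Mapping.keys p"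
  have "swapidx i ` Poly_Mapping.keys a \<subseteq> {1..N}"
    using in_vars_keys[OF assms(3) a] assms(1,2) by (auto simp: swapidx_def)
  then show "in_vars N (mon (ren_mon (swapidx i) a))"
    using keys_ren_mon[of "swapidx i" a] by (auto simp: in_vars_mon)
qed

lemma in_vars_ev: "in_vars N p \<Longrightarrow> in_vars N (ev j p)"
  unfolding ev_def by (rule in_vars_lin) (auto simp: in_vars_mon dest: in_vars_keys)

lemma in_vars_wsubst:
  assumes "1 \<le> N" "in_vars N p"
  shows "in_vars N (wsubst N p)"
  unfolding wsubst_lin
proof (rule in_vars_lin)
  fix a assume a: "a \<in> Poly_Mapping.keys p"
  have "shiftidx N ` Poly_Mapping.keys a \<subseteq> {1..N}"
    using in_vars_keys[OF assms(2) a] assms(1) shift_range by blast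
  then show "in_vars N (Poly_Mapping.single (ren_mon (shiftidx N) a) (qK ^ Poly_Mapping.lookup a 1))"
    using keys_ren_mon[of "shiftidx N" a] by (intro in_vars_single) auto
qed

definition proj :: "nat \<Rightarrow> mpoly \<Rightarrow> mpoly" where
  "proj N = lin (\<lambda>a. if Poly_Mapping.keys a \<subseteq> {1..N} then mon a else 0)"

lemma proj_mult: "proj N (p * q) = proj N p * proj N q"
  unfolding proj_def by (rule lin_mult) (auto simp: keys_add_nat mon_add)

lemma proj_id: "in_vars N p \<Longrightarrow> proj N p = p"
  unfolding proj_def
  by (subst (2) lin_expansion_mon[symmetric]) (rule lin_cong, auto simp: in_vars_def)

lemma in_vars_proj: "in_vars N (proj N p)"
  unfolding proj_def by (rule in_vars_lin) (auto simp: in_vars_mon)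

lemma in_vars_dd: "1 \<le> i \<Longrightarrow> i < N \<Longrightarrow> in_vars N (dd i)"
  by (simp add: dd_def in_vars_diff in_vars_Var)

lemma in_vars_divdiff:
  assumes "1 \<le> i" "i < N" "in_vars N p"
  shows "in_vars N (divdiff i p)"
proof -
  let ?r = "divdiff i p"
  have pd: "proj N (dd i) = dd i" using proj_id in_vars_dd assms by blast
  have "proj N ?r * dd i = proj N (?r * dd i)" by (simp add: proj_mult pd)
  also have "\<dots> = ?r * dd i"
  proof -
    have "in_vars N (p - swap_vars i p)" using in_vars_diff in_vars_swap assms by blast
    then show ?thesis by (simp add: divdiff_eq proj_id)
  qed
  finally have "proj N ?r = ?r" using dd_nz mult_right_cancel by blast
  then show ?thesis using in_vars_proj by metis
qed

lemma ev_Var_mult_dd_suc: "ev (Suc i) (Var (Suc i) * r) = 0"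
  by (simp add: ev_mult)

lemma ev_divdiff:
  "ev i (Var (Suc i) * divdiff i p) = - ev i p + ev i (swap_vars i p)"
proof -
  have "ev i (divdiff i p * dd i) = ev i (p - swap_vars i p)" by (simp add: divdiff_eq)
  then have "ev i (divdiff i p) * (- Var (Suc i)) = ev i p - ev i (swap_vars i p)"
    by (simp add: ev_mult dd_def ev_diff ev_Var_other)
  then show ?thesis by (simp add: ev_mult ev_Var_other algebra_simps)
qed

lemma swap_mon: "swap_vars i (mon a) = mon (ren_mon (swapidx i) a)"
  by (simp add: swap_vars_lin lin_mon)

lemma ev_mon: "ev j (mon a) = (if Poly_Mapping.lookup a j = 0 then mon a else 0)"
  by (simp add: ev_def lin_mon)

lemma swapidx_eq_iff: "swapidx i j = i \<longleftrightarrow> j = Suc i"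
  by (auto simp: swapidx_def)

lemma ev_swap: "ev i (swap_vars i p) = swap_vars i (ev (Suc i) p)"
proof -
  have "ev i (swap_vars i p) = lin (\<lambda>a. ev i (mon (ren_mon (swapidx i) a))) p"
    by (simp add: swap_vars_lin ev_def lin_lin)
  also have "\<dots> = lin (\<lambda>a. swap_vars i (if Poly_Mapping.lookup a (Suc i) = 0 then mon a else 0)) p"
    by (rule lin_cong) (simp add: ev_mon swap_mon lookup_ren_mon_uniq swapidx_eq_iff)
  also have "\<dots> = swap_vars i (ev (Suc i) p)"
    by (simp only: ev_def swap_vars_lin lin_lin)
  finally show ?thesis .
qed


lemma Tab_D:
  assumes "T \<in> Tab N lam"
  shows "length T = N" "distinct T" "set T = cells lam"
    "\<And>i j. i \<in> {1..N} \<Longrightarrow> j \<in> {1..N} \<Longrightarrow> fst (cell T i) = fst (cell T j) \<Longrightarrow> snd (cell T i) < snd (cell T j) \<Longrightarrow> j < i"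
    "\<And>i j. i \<in> {1..N} \<Longrightarrow> j \<in> {1..N} \<Longrightarrow> snd (cell T i) = snd (cell T j) \<Longrightarrow> fst (cell T i) < fst (cell T j) \<Longrightarrow> j < i"
  using assms unfolding Tab_def by auto

lemma cell_exch:
  assumes "length T = N" "1 \<le> i" "i < N" "p \<in> {1..N}"
  shows "cell (exch T i (Suc i)) p = cell T (swapidx i p)"
  using assms by (auto simp: cell_def exch_def swapidx_def nth_list_update)

lemma cell_inj:
  assumes "T \<in> Tab N lam" "p \<in> {1..N}" "q \<in> {1..N}" "cell T p = cell T q"
  shows "p = q"
proof -
  have "length T = N" "distinct T" using Tab_D[OF assms(1)] by auto
  then show ?thesis using assms(2-4) by (auto simp: cell_def nth_eq_iff_index_eq)
qed

lemma cell_in_cells: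
  assumes "T \<in> Tab N lam" "p \<in> {1..N}"
  shows "cell T p \<in> cells lam"
  using Tab_D[OF assms(1)] assms(2) by (auto simp: cell_def)

lemma cells_has_entry:
  assumes "T \<in> Tab N lam" "x \<in> cells lam"
  shows "\<exists>v\<in>{1..N}. cell T v = x"
proof -
  have "x \<in> set T" using Tab_D[OF assms(1)] assms(2) by auto
  then obtain k where "k < length T" "T ! k = x" by (auto simp: in_set_conv_nth)
  then show ?thesis using Tab_D[OF assms(1)]
    by (intro bexI[of _ "Suc k"]) (auto simp: cell_def)
qed

lemma exch_Tab:
  assumes T: "T \<in> Tab N lam" and i: "1 \<le> i" "i < N"
    and nr: "fst (cell T i) \<noteq> fst (cell T (Suc i))" and nc: "snd (cell T i) \<noteq> snd (cell T (Suc i))"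
  shows "exch T i (Suc i) \<in> Tab N lam"
proof -
  note D = Tab_D[OF T]
  let ?T' = "exch T i (Suc i)"
  have len: "length ?T' = N" using D by (simp add: exch_def)
  have dist: "distinct ?T'" using D i by (simp add: exch_def)
  have set: "set ?T' = cells lam" using D i by (simp add: exch_def)
  have ce: "cell ?T' p = cell T (swapidx i p)" if "p \<in> {1..N}" for p
    using cell_exch[OF D(1) i that] .
  have sw: "swapidx i p \<in> {1..N}" if "p \<in> {1..N}" for p
    using that i by (auto simp: swapidx_def)
  have ord: "q < p" if "p \<in> {1..N}" "q \<in> {1..N}" "swapidx i q < swapidx i p"
     "\<not> ((p = i \<and> q = Suc i) \<or> (p = Suc i \<and> q = i))" for p q
    using that by (auto simp: swapidx_def split: if_splits)
  have pair: "\<not> ((p = i \<and> q = Suc i) \<or> (p = Suc i \<and> q = i))"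
    if "p \<in> {1..N}" "q \<in> {1..N}" "fst (cell ?T' p) = fst (cell ?T' q) \<or> snd (cell ?T' p) = snd (cell ?T' q)" for p q
    using that nr nc ce by (auto simp: swapidx_def)
  show ?thesis
    unfolding Tab_def
  proof (intro CollectI conjI len dist set ballI impI)
    fix p q assume pq: "p \<in> {1..N}" "q \<in> {1..N}"
    {
      assume h: "fst (cell ?T' p) = fst (cell ?T' q) \<and> snd (cell ?T' p) < snd (cell ?T' q)"
      then have "swapidx i q < swapidx i p" using D(4)[OF sw[OF pq(1)] sw[OF pq(2)]] ce pq by auto
      then show "q < p" using ord pair pq h by blast
    }
    {
      assume h: "snd (cell ?T' p) = snd (cell ?T' q) \<and> fst (cell ?T' p) < fst (cell ?T' q)"
      then have "swapidx i q < swapidx i p" using D(5)[OF sw[OF pq(1)] sw[OF pq(2)]] ce pq by auto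
      then show "q < p" using ord pair pq h by blast
    }
  qed
qed

lemma CT_neq:
  assumes T: "T \<in> Tab N lam" and i: "1 \<le> i" "i < N"
    and nr: "fst (cell T i) \<noteq> fst (cell T (Suc i))" and nc: "snd (cell T i) \<noteq> snd (cell T (Suc i))"
  shows "CT T (Suc i) \<noteq> CT T i"
proof
  assume eq: "CT T (Suc i) = CT T i"
  note D = Tab_D[OF T]
  have iN: "i \<in> {1..N}" "Suc i \<in> {1..N}" using i by auto
  obtain ra ca where a: "cell T i = (ra, ca)" by fastforce
  obtain rb cb where b: "cell T (Suc i) = (rb, cb)" by fastforce
  have ca: "(ra, ca) \<in> cells lam" and cb: "(rb, cb) \<in> cells lam"
    using cell_in_cells[OF T] iN a b by metis+
  have e: "int cb - int rb = int ca - int ra" using eq a b by (simp add: CT_def)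
  show False
  proof (cases "ra < rb")
    case True
    then have "ca < cb" using e by linarith
    then have "(rb, ca) \<in> cells lam" using cb by (auto simp: cells_def)
    then obtain v where v: "v \<in> {1..N}" "cell T v = (rb, ca)" using cells_has_entry[OF T] by blast
    have "Suc i < v" using D(4)[OF v(1) iN(2)] v b \<open>ca < cb\<close> by auto
    moreover have "v < i" using D(5)[OF iN(1) v(1)] v a True by auto
    ultimately show False by simp
  next
    case False
    then have "rb < ra" using nr a b by auto
    then have "cb < ca" using e by linarith
    then have "(ra, cb) \<in> cells lam" using ca by (auto simp: cells_def)
    then obtain v where v: "v \<in> {1..N}" "cell T v = (ra, cb)" using cells_has_entry[OF T] by blast
    have "i < v" using D(4)[OF v(1) iN(1)] v a \<open>cb < ca\<close> by auto
    moreover have "v < Suc i" using D(5)[OF iN(2) v(1)] v b \<open>rb < ra\<close> by auto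
    ultimately show False by simp
  qed
qed

lemma exch_exch:
  assumes "length T = N" "1 \<le> i" "i < N"
  shows "exch (exch T i (Suc i)) i (Suc i) = T"
  using assms by (auto simp: exch_def nth_list_update list_update_swap intro!: nth_equalityI)

lemma exch_neq:
  assumes T: "T \<in> Tab N lam" and i: "1 \<le> i" "i < N"
    and nr: "fst (cell T i) \<noteq> fst (cell T (Suc i))"
  shows "exch T i (Suc i) \<noteq> T"
proof
  assume "exch T i (Suc i) = T"
  then have "cell T (Suc i) = cell T i"
    using cell_exch[OF Tab_D(1)[OF T] i, of i] i by (auto simp: swapidx_def)
  then show False using nr by simp
qed


lemma sK_pow: "sK ^ n = Fract ([:0, 1:] ^ n) 1"
  by (induction n) (auto simp: sK_def One_fract_def)

lemma sK_pow_ne1: "n > 0 \<Longrightarrow> sK ^ n \<noteq> 1"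
proof
  assume n: "n > 0" and h: "sK ^ n = 1"
  then have "([:0, 1:] :: complex poly fract poly) ^ n = 1"
    by (simp add: sK_pow One_fract_def eq_fract)
  then have "degree (([:0, 1:] :: complex poly fract poly) ^ n) = 0" by simp
  then show False using n by (simp add: degree_power_eq)
qed

lemma sK_nz: "sK \<noteq> 0"
proof
  assume "sK = 0"
  then have "Fract ([:0, 1:] :: complex poly fract poly) 1 = Fract 0 1" by (simp add: sK_def Zero_fract_def)
  then show False by (simp add: eq_fract)
qed

lemma sK_ne1: "sK \<noteq> 1" using sK_pow_ne1[of 1] by simp

lemma sK_powi_ne1: "m \<noteq> 0 \<Longrightarrow> sK powi m \<noteq> 1"
proof (cases "m > 0")
  case True
  then show ?thesis using sK_pow_ne1[of "nat m"] by (simp add: power_int_def)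
next
  case False
  assume "m \<noteq> 0"
  then have "nat (-m) > 0" using False by simp
  then show ?thesis using sK_pow_ne1[of "nat (-m)"] False
    by (simp add: power_int_def power_inverse)
qed

lemma sK_powi_nz: "sK powi m \<noteq> 0"
  using sK_nz by simp

definition Acoef :: "int \<Rightarrow> K" where "Acoef m = (sK - 1) / (1 - sK powi m)"
definition Ccoef :: "int \<Rightarrow> K" where
  "Ccoef m = sK * (1 - sK powi (m + 1)) * (1 - sK powi (m - 1)) / (1 - sK powi m)\<^sup>2"

lemma field_id1:
  fixes s x :: "'a::field"
  assumes "s \<noteq> 0" "x \<noteq> 0" "x \<noteq> 1"
  shows "(s - 1) / (1 - x) + (s - 1) / (1 - inverse x) = s - 1"
proof -
  define d where "d = 1 - x"
  have d: "d \<noteq> 0" using assms by (simp add: d_def)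
  have x: "x = 1 - d" by (simp add: d_def)
  have "1 - d \<noteq> 0" using assms x by simp
  then show ?thesis unfolding x using d by (simp add: field_simps)
qed

lemma field_id2:
  fixes s x :: "'a::field"
  assumes "s \<noteq> 0" "x \<noteq> 0" "x \<noteq> 1"
  shows "((s - 1) / (1 - x)) * ((s - 1) / (1 - x)) + s * (1 - x * s) * (1 - x / s) / (1 - x)\<^sup>2
     = (s - 1) * ((s - 1) / (1 - x)) + s"
proof -
  define d where "d = 1 - x"
  have d: "d \<noteq> 0" using assms by (simp add: d_def)
  have x: "x = 1 - d" by (simp add: d_def)
  have e: "s * (1 - x * s) * (1 - x / s) = (1 - x * s) * (s - x)" using assms by (simp add: field_simps)
  show ?thesis unfolding e unfolding x using d by (simp add: field_simps power2_eq_square)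
qed

lemma Acoef_neg: "m \<noteq> 0 \<Longrightarrow> Acoef m + Acoef (-m) = sK - 1"
  unfolding Acoef_def power_int_minus using field_id1 sK_nz sK_powi_nz sK_powi_ne1 by blast

lemma Ccoef_alt: "Ccoef m = sK * (1 - sK powi m * sK) * (1 - sK powi m / sK) / (1 - sK powi m)\<^sup>2"
  unfolding Ccoef_def using sK_nz by (simp add: power_int_add_1 power_int_diff)

lemma AC_id: "m \<noteq> 0 \<Longrightarrow> Acoef m * Acoef m + Ccoef m = (sK - 1) * Acoef m + sK"
  unfolding Acoef_def Ccoef_alt using field_id2 sK_nz sK_powi_nz sK_powi_ne1 by blast

lemma AC_id2: "m \<noteq> 0 \<Longrightarrow> Acoef m * Acoef m + Ccoef (-m) = (sK - 1) * Acoef m + sK"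
proof -
  assume m: "m \<noteq> 0"
  have a: "Acoef m = sK - 1 - Acoef (-m)" using Acoef_neg[OF m] by (simp add: algebra_simps)
  have "Acoef (-m) * Acoef (-m) + Ccoef (-m) = (sK - 1) * Acoef (-m) + sK" using AC_id m by simp
  then show ?thesis unfolding a by (simp add: algebra_simps)
qed

lemma finite_cells: "finite (cells lam)"
proof -
  have "cells lam \<subseteq> {..<length lam} \<times> {..<sum_list lam + Max (set lam \<union> {0})}"
  proof
    fix x assume "x \<in> cells lam"
    then obtain r c where x: "x = (r, c)" "r < length lam" "c < lam ! r" by (auto simp: cells_def)
    have "lam ! r \<in> set lam \<union> {0}" using x by simp
    then have "lam ! r \<le> Max (set lam \<union> {0})" by (intro Max_ge) auto
    then have "c < sum_list lam + Max (set lam \<union> {0})" using x(3) by linarith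
    then show "x \<in> {..<length lam} \<times> {..<sum_list lam + Max (set lam \<union> {0})}" using x by auto
  qed
  then show ?thesis by (rule finite_subset) auto
qed

lemma finite_Tab: "finite (Tab N lam)"
proof -
  have "Tab N lam \<subseteq> {xs. set xs \<subseteq> cells lam \<and> length xs = N}" by (auto simp: Tab_def)
  then show ?thesis using finite_lists_length_eq[OF finite_cells] finite_subset by blast
qed

lemma hB_row: "fst (cell T i) = fst (cell T (Suc i)) \<Longrightarrow> heckeB i T = (\<lambda>U. if U = T then sK else 0)"
  by (simp add: heckeB_def Let_def)
lemma hB_col: "fst (cell T i) \<noteq> fst (cell T (Suc i)) \<Longrightarrow> snd (cell T i) = snd (cell T (Suc i)) \<Longrightarrow>
   heckeB i T = (\<lambda>U. if U = T then -1 else 0)"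
  by (simp add: heckeB_def Let_def)
lemma hB_hi: "fst (cell T (Suc i)) < fst (cell T i) \<Longrightarrow> snd (cell T i) \<noteq> snd (cell T (Suc i)) \<Longrightarrow>
   heckeB i T = (\<lambda>U. if U = T then Acoef (CT T (Suc i) - CT T i)
      else if U = exch T i (Suc i) then Ccoef (CT T (Suc i) - CT T i) else 0)"
  unfolding heckeB_def Let_def Acoef_def Ccoef_def by (rule ext) simp
lemma hB_lo: "fst (cell T i) < fst (cell T (Suc i)) \<Longrightarrow> snd (cell T i) \<noteq> snd (cell T (Suc i)) \<Longrightarrow>
   heckeB i T = (\<lambda>U. if U = T then Acoef (CT T (Suc i) - CT T i)
      else if U = exch T i (Suc i) then 1 else 0)"
  unfolding heckeB_def Let_def Acoef_def by (rule ext) simp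

lemma sum_if1: "finite S \<Longrightarrow> T \<in> S \<Longrightarrow> (\<Sum>W\<in>S. (if W = T then (a::'a::comm_ring_1) else 0) * f W) = a * f T"
proof -
  assume h: "finite S" "T \<in> S"
  have "(\<Sum>W\<in>S. (if W = T then a else 0) * f W) = (\<Sum>W\<in>S. if W = T then a * f T else 0)"
    by (rule sum.cong) auto
  then show ?thesis using h by simp
qed

lemma sum_if2: "finite S \<Longrightarrow> T \<in> S \<Longrightarrow> T' \<in> S \<Longrightarrow> T \<noteq> T' \<Longrightarrow>
  (\<Sum>W\<in>S. (if W = T then (a::'a::comm_ring_1) else if W = T' then b else 0) * f W) = a * f T + b * f T'"
proof -
  assume h: "finite S" "T \<in> S" "T' \<in> S" "T \<noteq> T'"
  have "(\<Sum>W\<in>S. (if W = T then a else if W = T' then b else 0) * f W)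
    = (\<Sum>W\<in>S. (if W = T then a else 0) * f W) + (\<Sum>W\<in>S. (if W = T' then b else 0) * f W)"
    by (subst sum.distrib[symmetric]) (rule sum.cong, auto simp: h)
  then show ?thesis using h by (simp add: sum_if1)
qed

context
  fixes N lam i T
  assumes T: "T \<in> Tab N lam" and i: "1 \<le> i" "i < N"
begin

lemma cellT'_i: "cell (exch T i (Suc i)) i = cell T (Suc i)"
  using cell_exch[OF Tab_D(1)[OF T] i, of i] i by (simp add: swapidx_def)
lemma cellT'_Si: "cell (exch T i (Suc i)) (Suc i) = cell T i"
  using cell_exch[OF Tab_D(1)[OF T] i, of "Suc i"] i by (simp add: swapidx_def)
lemma CT_T': "CT (exch T i (Suc i)) (Suc i) - CT (exch T i (Suc i)) i = - (CT T (Suc i) - CT T i)"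
  by (simp add: CT_def cellT'_i cellT'_Si)

lemma QR: "(\<Sum>W\<in>Tab N lam. heckeB i T W * heckeB i W U)
     = (sK - 1) * heckeB i T U + sK * (if T = U then 1 else 0)"
proof -
  let ?T' = "exch T i (Suc i)"
  let ?m = "CT T (Suc i) - CT T i"
  have fin: "finite (Tab N lam)" by (rule finite_Tab)
  consider (row) "fst (cell T i) = fst (cell T (Suc i))"
    | (col) "fst (cell T i) \<noteq> fst (cell T (Suc i))" "snd (cell T i) = snd (cell T (Suc i))"
    | (hi) "fst (cell T (Suc i)) < fst (cell T i)" "snd (cell T i) \<noteq> snd (cell T (Suc i))"
    | (lo) "fst (cell T i) < fst (cell T (Suc i))" "snd (cell T i) \<noteq> snd (cell T (Suc i))"
    by (meson linorder_neqE_nat)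
  then show ?thesis
  proof cases
    case row
    have e: "\<And>W. heckeB i T W = (if W = T then sK else 0)" using hB_row[OF row] by simp
    have "(\<Sum>W\<in>Tab N lam. heckeB i T W * heckeB i W U) = (\<Sum>W\<in>Tab N lam. (if W = T then sK else 0) * heckeB i W U)"
      by (simp only: e)
    also have "\<dots> = sK * heckeB i T U" by (rule sum_if1[OF fin T])
    finally show ?thesis using e by (auto simp: algebra_simps)
  next
    case col
    have e: "\<And>W. heckeB i T W = (if W = T then -1 else 0)" using hB_col[OF col] by simp
    have "(\<Sum>W\<in>Tab N lam. heckeB i T W * heckeB i W U) = (\<Sum>W\<in>Tab N lam. (if W = T then -1 else 0) * heckeB i W U)"
      by (simp only: e)
    also have "\<dots> = -1 * heckeB i T U" by (rule sum_if1[OF fin T])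
    finally show ?thesis using e by (auto simp: algebra_simps)
  next
    case hi
    have nr: "fst (cell T i) \<noteq> fst (cell T (Suc i))" using hi by simp
    have T'T: "?T' \<in> Tab N lam" using exch_Tab[OF T i nr hi(2)] .
    have ne: "T \<noteq> ?T'" using exch_neq[OF T i nr] by simp
    have m: "?m \<noteq> 0" using CT_neq[OF T i nr hi(2)] by simp
    have lo': "fst (cell ?T' i) < fst (cell ?T' (Suc i))" "snd (cell ?T' i) \<noteq> snd (cell ?T' (Suc i))"
      using hi by (auto simp: cellT'_i cellT'_Si)
    have h': "heckeB i ?T' = (\<lambda>U. if U = ?T' then Acoef (- ?m) else if U = T then 1 else 0)"
      by (simp only: hB_lo[OF lo'] CT_T' exch_exch[OF Tab_D(1)[OF T] i])
    have s: "(\<Sum>W\<in>Tab N lam. heckeB i T W * heckeB i W U) = Acoef ?m * heckeB i T U + Ccoef ?m * heckeB i ?T' U"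
    proof -
      have e: "\<And>W. heckeB i T W = (if W = T then Acoef ?m else if W = ?T' then Ccoef ?m else 0)"
        using hB_hi[OF hi] by simp
      show ?thesis by (simp only: e sum_if2[OF fin T T'T ne])
    qed
    have cc: "Ccoef ?m * (Acoef ?m + Acoef (- ?m)) = Ccoef ?m * (sK - 1)" using Acoef_neg[OF m] by simp
    show ?thesis unfolding s
      unfolding hB_hi[OF hi] h' using ne AC_id[OF m] Acoef_neg[OF m] cc
      by (auto simp: algebra_simps)
  next
    case lo
    have nr: "fst (cell T i) \<noteq> fst (cell T (Suc i))" using lo by simp
    have T'T: "?T' \<in> Tab N lam" using exch_Tab[OF T i nr lo(2)] .
    have ne: "T \<noteq> ?T'" using exch_neq[OF T i nr] by simp
    have m: "?m \<noteq> 0" using CT_neq[OF T i nr lo(2)] by simp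
    have hi': "fst (cell ?T' (Suc i)) < fst (cell ?T' i)" "snd (cell ?T' i) \<noteq> snd (cell ?T' (Suc i))"
      using lo by (auto simp: cellT'_i cellT'_Si)
    have h': "heckeB i ?T' = (\<lambda>U. if U = ?T' then Acoef (- ?m) else if U = T then Ccoef (- ?m) else 0)"
      by (simp only: hB_hi[OF hi'] CT_T' exch_exch[OF Tab_D(1)[OF T] i])
    have s: "(\<Sum>W\<in>Tab N lam. heckeB i T W * heckeB i W U) = Acoef ?m * heckeB i T U + 1 * heckeB i ?T' U"
    proof -
      have e: "\<And>W. heckeB i T W = (if W = T then Acoef ?m else if W = ?T' then 1 else 0)"
        using hB_lo[OF lo] by simp
      show ?thesis by (simp only: e sum_if2[OF fin T T'T ne])
    qed
    show ?thesis unfolding s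
      unfolding hB_lo[OF lo] h' using ne AC_id2[OF m] Acoef_neg[OF m]
      by (auto simp: algebra_simps)
  qed
qed

lemma hB_out: "U \<notin> Tab N lam \<Longrightarrow> heckeB i T U = 0"
proof -
  assume U: "U \<notin> Tab N lam"
  have UT: "U \<noteq> T" using U T by auto
  consider (row) "fst (cell T i) = fst (cell T (Suc i))"
    | (col) "fst (cell T i) \<noteq> fst (cell T (Suc i))" "snd (cell T i) = snd (cell T (Suc i))"
    | (nadj) "fst (cell T i) \<noteq> fst (cell T (Suc i))" "snd (cell T i) \<noteq> snd (cell T (Suc i))"
    by blast
  then show ?thesis
  proof cases
    case nadj
    have "exch T i (Suc i) \<in> Tab N lam" using exch_Tab[OF T i nadj] .
    then have "U \<noteq> exch T i (Suc i)" using U by auto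
    then show ?thesis using nadj UT by (simp add: heckeB_def Let_def)
  qed (use UT in \<open>simp_all add: heckeB_def Let_def\<close>)
qed

end


definition supp :: "nat \<Rightarrow> nat list \<Rightarrow> vec \<Rightarrow> bool" where
  "supp N lam v \<longleftrightarrow> (\<forall>U. U \<notin> Tab N lam \<longrightarrow> v U = 0)"

definition vinv :: "nat \<Rightarrow> nat list \<Rightarrow> nat \<Rightarrow> vec \<Rightarrow> vec" where
  "vinv N lam i v = (\<lambda>U. inverse sK * (vact N lam i v U + (1 - sK) * v U))"

definition tinv :: "nat \<Rightarrow> tableau \<Rightarrow> tableau \<Rightarrow> K" where
  "tinv i T U = inverse sK * (heckeB i T U + (1 - sK) * (if T = U then 1 else 0))"

lemma aux1: "(\<Sum>W\<in>S. (a::'b::comm_ring_1) * (X W + c * v W) * h W) = a * ((\<Sum>W\<in>S. X W * h W) + c * (\<Sum>W\<in>S. v W * h W))"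
proof -
  have "(\<Sum>W\<in>S. a * (X W + c * v W) * h W) = (\<Sum>W\<in>S. a * (X W * h W) + a * (c * (v W * h W)))"
    by (rule sum.cong) (simp_all add: algebra_simps)
  also have "\<dots> = a * (\<Sum>W\<in>S. X W * h W) + a * (c * (\<Sum>W\<in>S. v W * h W))"
    by (simp add: sum.distrib sum_distrib_left)
  finally show ?thesis by (simp add: distrib_left)
qed

lemma aux2: "(\<Sum>W\<in>S. v W * ((a::'b::comm_ring_1) * (h W + c * d W))) = a * ((\<Sum>W\<in>S. v W * h W) + c * (\<Sum>W\<in>S. v W * d W))"
proof -
  have "(\<Sum>W\<in>S. v W * (a * (h W + c * d W))) = (\<Sum>W\<in>S. a * (v W * h W) + a * (c * (v W * d W)))"
    by (rule sum.cong) (simp_all add: algebra_simps)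
  also have "\<dots> = a * (\<Sum>W\<in>S. v W * h W) + a * (c * (\<Sum>W\<in>S. v W * d W))"
    by (simp add: sum.distrib sum_distrib_left)
  finally show ?thesis by (simp add: distrib_left)
qed

lemma aux3: "(\<Sum>W\<in>S. v W * ((a::'b::comm_ring_1) * h W + b * d W)) = a * (\<Sum>W\<in>S. v W * h W) + b * (\<Sum>W\<in>S. v W * d W)"
proof -
  have "(\<Sum>W\<in>S. v W * (a * h W + b * d W)) = (\<Sum>W\<in>S. a * (v W * h W) + b * (v W * d W))"
    by (rule sum.cong) (simp_all add: algebra_simps)
  then show ?thesis by (simp add: sum.distrib sum_distrib_left)
qed

lemma sum_delta_supp:
  assumes "supp N lam v"
  shows "(\<Sum>T\<in>Tab N lam. v T * (if T = U then 1 else 0)) = v U"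
proof (cases "U \<in> Tab N lam")
  case True
  have "(\<Sum>T\<in>Tab N lam. v T * (if T = U then 1 else 0)) = (\<Sum>T\<in>Tab N lam. if T = U then v U else 0)"
    by (rule sum.cong) auto
  then show ?thesis using True finite_Tab by simp
next
  case False
  have "(\<Sum>T\<in>Tab N lam. v T * (if T = U then 1 else 0)) = 0"
    by (rule sum.neutral) (use False in auto)
  then show ?thesis using False assms by (simp add: supp_def)
qed

lemma vact_supp: "1 \<le> i \<Longrightarrow> i < N \<Longrightarrow> supp N lam (vact N lam i v)"
  unfolding supp_def vact_def by (auto intro!: sum.neutral simp: hB_out)

lemma vinv_supp: "supp N lam v \<Longrightarrow> 1 \<le> i \<Longrightarrow> i < N \<Longrightarrow> supp N lam (vinv N lam i v)"
  using vact_supp[of i N lam v] unfolding supp_def vinv_def by auto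

lemma basis_supp: "T \<in> Tab N lam \<Longrightarrow> supp N lam (basis_vec T)"
  unfolding supp_def basis_vec_def by auto

lemma vact_vinv:
  assumes v: "supp N lam v" and i: "1 \<le> i" "i < N"
  shows "vact N lam i (vinv N lam i v) = v"
proof
  fix U
  let ?h = "heckeB i"
  let ?S = "Tab N lam"
  have A: "(\<Sum>W\<in>?S. (\<Sum>T\<in>?S. v T * ?h T W) * ?h W U)
      = (\<Sum>T\<in>?S. v T * ((sK - 1) * ?h T U + sK * (if T = U then 1 else 0)))"
  proof -
    have "(\<Sum>W\<in>?S. (\<Sum>T\<in>?S. v T * ?h T W) * ?h W U) = (\<Sum>W\<in>?S. \<Sum>T\<in>?S. v T * (?h T W * ?h W U))"
      by (simp add: sum_distrib_right mult.assoc)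
    also have "\<dots> = (\<Sum>T\<in>?S. \<Sum>W\<in>?S. v T * (?h T W * ?h W U))" by (rule sum.swap)
    also have "\<dots> = (\<Sum>T\<in>?S. v T * (\<Sum>W\<in>?S. ?h T W * ?h W U))" by (simp add: sum_distrib_left)
    also have "\<dots> = (\<Sum>T\<in>?S. v T * ((sK - 1) * ?h T U + sK * (if T = U then 1 else 0)))"
      by (rule sum.cong) (auto simp: QR[OF _ i])
    finally show ?thesis .
  qed
  have "vact N lam i (vinv N lam i v) U
     = (\<Sum>W\<in>?S. inverse sK * ((\<Sum>T\<in>?S. v T * ?h T W) + (1 - sK) * v W) * ?h W U)"
    by (simp add: vact_def vinv_def)
  also have "\<dots> = inverse sK * ((\<Sum>W\<in>?S. (\<Sum>T\<in>?S. v T * ?h T W) * ?h W U) + (1 - sK) * (\<Sum>W\<in>?S. v W * ?h W U))"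
    by (rule aux1)
  also have "\<dots> = inverse sK * (sK * (\<Sum>T\<in>?S. v T * (if T = U then 1 else 0)))"
    unfolding A aux3 by (simp add: algebra_simps)
  also have "\<dots> = v U" using sK_nz sum_delta_supp[OF v] by simp
  finally show "vact N lam i (vinv N lam i v) U = v U" .
qed

lemma vinv_tinv:
  assumes v: "supp N lam v"
  shows "vinv N lam i v U = (\<Sum>T\<in>Tab N lam. v T * tinv i T U)"
proof -
  have "(\<Sum>T\<in>Tab N lam. v T * tinv i T U)
     = inverse sK * ((\<Sum>T\<in>Tab N lam. v T * heckeB i T U) + (1 - sK) * (\<Sum>T\<in>Tab N lam. v T * (if T = U then 1 else 0)))"
    unfolding tinv_def by (rule aux2)
  also have "\<dots> = vinv N lam i v U" using sum_delta_supp[OF v] by (simp add: vinv_def vact_def)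
  finally show ?thesis by simp
qed

lemma vact_lin:
  "vact N lam i (\<lambda>U. \<Sum>T\<in>S. f T * w T U) = (\<lambda>U. \<Sum>T\<in>S. f T * vact N lam i (w T) U)"
proof
  fix U
  have "vact N lam i (\<lambda>U. \<Sum>T\<in>S. f T * w T U) U = (\<Sum>W\<in>Tab N lam. \<Sum>T\<in>S. f T * (w T W * heckeB i W U))"
    by (simp add: vact_def sum_distrib_right mult.assoc)
  also have "\<dots> = (\<Sum>T\<in>S. \<Sum>W\<in>Tab N lam. f T * (w T W * heckeB i W U))" by (rule sum.swap)
  also have "\<dots> = (\<Sum>T\<in>S. f T * vact N lam i (w T) U)" by (simp add: vact_def sum_distrib_left)
  finally show "vact N lam i (\<lambda>U. \<Sum>T\<in>S. f T * w T U) U = (\<Sum>T\<in>S. f T * vact N lam i (w T) U)" .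
qed

lemma fold_vact_lin:
  "fold (vact N lam) xs (\<lambda>U. \<Sum>T\<in>S. f T * w T U) = (\<lambda>U. \<Sum>T\<in>S. f T * fold (vact N lam) xs (w T) U)"
proof (induction xs arbitrary: w)
  case Nil then show ?case by simp
next
  case (Cons x xs)
  show ?case by (simp add: vact_lin Cons.IH[of "\<lambda>T. vact N lam x (w T)"])
qed

lemma supp_expand: "supp N lam v \<Longrightarrow> v = (\<lambda>U. \<Sum>T\<in>Tab N lam. v T * basis_vec T U)"
proof
  fix U assume v: "supp N lam v"
  show "v U = (\<Sum>T\<in>Tab N lam. v T * basis_vec T U)"
    using sum_delta_supp[OF v, of U] by (simp add: basis_vec_def eq_commute[of _ U])
qed

lemma vchain_lin:
  assumes "supp N lam v"
  shows "vchain N lam v U = (\<Sum>T\<in>Tab N lam. v T * vchain N lam (basis_vec T) U)"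
proof -
  have "vchain N lam v = fold (vact N lam) [1..<N] (\<lambda>U. \<Sum>T\<in>Tab N lam. v T * basis_vec T U)"
    unfolding vchain_def using supp_expand[OF assms] by simp
  then show ?thesis by (simp add: fold_vact_lin vchain_def)
qed

lemma fold_vinv_supp:
  "supp N lam v \<Longrightarrow> (\<And>x. x \<in> set xs \<Longrightarrow> 1 \<le> x \<and> x < N) \<Longrightarrow> supp N lam (fold (vinv N lam) xs v)"
proof (induction xs arbitrary: v)
  case Nil then show ?case by simp
next
  case (Cons x xs)
  then show ?case by (simp add: vinv_supp)
qed

lemma fold_cancel:
  assumes "1 \<le> k" "k \<le> N" "supp N lam v"
  shows "fold (vact N lam) [k..<N] (fold (vinv N lam) (rev [k..<N]) v) = v"
  using assms(2,1)
proof (induction k rule: inc_induct)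
  case base then show ?case by simp
next
  case (step n)
  have up: "[n..<N] = n # [Suc n..<N]" using step by (simp add: upt_conv_Cons)
  have sp: "supp N lam (fold (vinv N lam) (rev [Suc n..<N]) v)"
    by (rule fold_vinv_supp[OF assms(3)]) (use step in auto)
  have "fold (vact N lam) [n..<N] (fold (vinv N lam) (rev [n..<N]) v)
      = fold (vact N lam) [Suc n..<N] (vact N lam n (vinv N lam n (fold (vinv N lam) (rev [Suc n..<N]) v)))"
    by (simp add: up)
  also have "\<dots> = fold (vact N lam) [Suc n..<N] (fold (vinv N lam) (rev [Suc n..<N]) v)"
    using vact_vinv[OF sp] step by simp
  also have "\<dots> = v" using step by simp
  finally show ?case .
qed


definition cswap :: "nat \<Rightarrow> (nat \<Rightarrow> nat) \<Rightarrow> (nat \<Rightarrow> nat)" where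
  "cswap i f = swapidx i \<circ> f"

definition perm :: "nat \<Rightarrow> nat \<Rightarrow> nat \<Rightarrow> nat" where
  "perm N k = fold cswap (rev [k..<N]) id"

definition sig :: "nat \<Rightarrow> nat \<Rightarrow> mpoly \<Rightarrow> mpoly" where
  "sig N k p = fold swap_vars (rev [k..<N]) p"

lemma fold_swap_lin:
  "fold swap_vars xs (lin (\<lambda>a. mon (ren_mon f a)) p) = lin (\<lambda>a. mon (ren_mon (fold cswap xs f) a)) p"
proof (induction xs arbitrary: f)
  case Nil then show ?case by simp
next
  case (Cons x xs)
  have "swap_vars x (lin (\<lambda>a. mon (ren_mon f a)) p) = lin (\<lambda>a. mon (ren_mon (cswap x f) a)) p"
    by (simp add: swap_vars_lin[of x "lin _ _"] lin_lin lin_mon ren_mon_comp cswap_def)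
  then have "fold swap_vars (x # xs) (lin (\<lambda>a. mon (ren_mon f a)) p) = fold swap_vars xs (lin (\<lambda>a. mon (ren_mon (cswap x f) a)) p)"
    by simp
  also have "\<dots> = lin (\<lambda>a. mon (ren_mon (fold cswap xs (cswap x f)) a)) p"
    by (rule Cons.IH)
  finally show ?case by simp
qed

lemma shift_eqN: "j \<in> {1..N} \<Longrightarrow> shiftidx N j = N \<longleftrightarrow> j = 1"
  by (auto simp: shiftidx_def)

lemma lin_mon_id: "lin (\<lambda>a. mon (ren_mon id a)) p = p"
  using lin_expansion_mon[of p] by (simp add: ren_mon_id)

lemma sig_lin: "sig N k p = lin (\<lambda>a. mon (ren_mon (perm N k) a)) p"
  unfolding sig_def perm_def
  using fold_swap_lin[of "rev [k..<N]" id p] by (simp add: lin_mon_id)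

lemma sig_step: "k < N \<Longrightarrow> sig N k p = swap_vars k (sig N (Suc k) p)"
  by (simp add: sig_def upt_conv_Cons)

lemma sig_N: "sig N N p = p" by (simp add: sig_def)

lemma perm_val:
  assumes "1 \<le> k" "k \<le> N" "j \<in> {1..N}"
  shows "perm N k j = (if j = N then k else if k \<le> j then Suc j else j)"
  using assms(2,1,3)
proof (induction k rule: inc_induct)
  case base then show ?case by (simp add: perm_def)
next
  case (step n)
  have "perm N n = swapidx n \<circ> perm N (Suc n)"
    using step by (simp add: perm_def upt_conv_Cons cswap_def)
  then show ?case using step by (auto simp: swapidx_def)
qed

lemma W1:
  assumes N: "2 \<le> N" and p: "in_vars N p"
  shows "wsubst N (sig N 1 (ev N p)) = ev N p"
proof -
  have "wsubst N (sig N 1 (ev N p)) = lin (\<lambda>a. wsubst N (sig N 1 (if Poly_Mapping.lookup a N = 0 then mon a else 0))) p"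
    by (simp only: ev_def sig_lin[of N 1 "lin _ _"] sig_lin[of N 1 "if _ then _ else _"] wsubst_lin lin_lin)
  also have "\<dots> = lin (\<lambda>a. if Poly_Mapping.lookup a N = 0 then mon a else 0) p"
  proof (rule lin_cong)
    fix a assume a: "a \<in> Poly_Mapping.keys p"
    have ka: "j \<in> {1..N}" if "j \<in> Poly_Mapping.keys a" for j using in_vars_keys[OF p a that] by simp
    have pv: "perm N 1 j = (if j = N then 1 else Suc j)" if "j \<in> Poly_Mapping.keys a" for j
      using perm_val[of 1 N j] ka[OF that] N by auto
    have sp: "shiftidx N (perm N 1 j) = j" if "j \<in> Poly_Mapping.keys a" for j
    proof -
      have "1 \<le> j" "j \<le> N" using ka[OF that] by auto
      then show ?thesis using pv[OF that] by (auto simp: shiftidx_def)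
    qed
    have id: "ren_mon (shiftidx N) (ren_mon (perm N 1) a) = a"
      unfolding ren_mon_comp by (rule ren_mon_id) (use sp in auto)
    have l1: "Poly_Mapping.lookup (ren_mon (perm N 1) a) 1 = Poly_Mapping.lookup a N"
    proof (rule lookup_ren_mon_uniq)
      fix j assume j: "j \<in> Poly_Mapping.keys a"
      show "perm N 1 j = 1 \<longleftrightarrow> j = N" using pv[OF j] ka[OF j] by auto
    qed
    show "wsubst N (sig N 1 (if Poly_Mapping.lookup a N = 0 then mon a else 0)) = (if Poly_Mapping.lookup a N = 0 then mon a else 0)"
      using id l1 by (simp add: sig_lin wsubst_lin lin_mon) (simp add: mon_def)
  qed
  also have "\<dots> = ev N p" by (simp add: ev_def)
  finally show ?thesis .
qed

lemma W2:
  assumes N: "2 \<le> N" and p: "in_vars N p"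
  shows "ev N (wsubst N p) = wsubst N (ev 1 p)"
proof -
  have "ev N (wsubst N p) = lin (\<lambda>a. ev N (Poly_Mapping.single (ren_mon (shiftidx N) a) (qK ^ Poly_Mapping.lookup a 1))) p"
    by (simp only: ev_def wsubst_lin lin_lin)
  also have "\<dots> = lin (\<lambda>a. wsubst N (if Poly_Mapping.lookup a 1 = 0 then mon a else 0)) p"
  proof (rule lin_cong)
    fix a assume a: "a \<in> Poly_Mapping.keys p"
    have ka: "j \<in> {1..N}" if "j \<in> Poly_Mapping.keys a" for j using in_vars_keys[OF p a that] by simp
    have l: "Poly_Mapping.lookup (ren_mon (shiftidx N) a) N = Poly_Mapping.lookup a 1"
      by (rule lookup_ren_mon_uniq) (use ka shift_eqN in blast)
    show "ev N (Poly_Mapping.single (ren_mon (shiftidx N) a) (qK ^ Poly_Mapping.lookup a 1)) =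
          wsubst N (if Poly_Mapping.lookup a 1 = 0 then mon a else 0)"
      by (simp add: ev_def lin_single wsubst_lin lin_mon l smult_mp_mon)
  qed
  also have "\<dots> = wsubst N (ev 1 p)"
    by (simp only: ev_def wsubst_lin lin_lin)
  finally show ?thesis .
qed


lemma msum_delta:
  assumes "finite S" "U \<in> S"
  shows "(\<Sum>T\<in>S. smult_mp (if T = U then a else 0) (Y T)) = smult_mp a (Y U)"
proof -
  have "(\<Sum>T\<in>S. smult_mp (if T = U then a else 0) (Y T)) = (\<Sum>T\<in>S. if T = U then smult_mp a (Y U) else 0)"
    by (rule sum.cong) auto
  then show ?thesis using assms by simp
qed

lemma in_vars_opT:
  assumes P: "inM N lam P" and i: "1 \<le> i" "i < N"
  shows "in_vars N (opT N lam i P U)"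
proof -
  have pv: "in_vars N (P T)" for T using P by (simp add: inM_def)
  show ?thesis unfolding opT_def
    using i pv by (auto intro!: in_vars_add in_vars_smult in_vars_mult in_vars_Var in_vars_divdiff
        in_vars_sum in_vars_swap)
qed

lemma opTinv_inM:
  assumes P: "inM N lam P" and i: "1 \<le> i" "i < N"
  shows "inM N lam (opTinv N lam i P)"
  unfolding inM_def
proof (intro conjI allI impI)
  fix U
  show "U \<notin> Tab N lam \<Longrightarrow> opTinv N lam i P U = 0"
    using P by (simp add: opTinv_def opT_def inM_def)
  show "in_vars N (opTinv N lam i P U)"
    unfolding opTinv_def using P
    by (auto intro!: in_vars_smult in_vars_add in_vars_opT[OF P i] simp: inM_def)
qed

lemma ev_opTinv:
  assumes P: "inM N lam P" and U: "U \<in> Tab N lam"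
  shows "ev i (opTinv N lam i P U) =
    (\<Sum>T\<in>Tab N lam. smult_mp (tinv i T U) (swap_vars i (ev (Suc i) (P T))))"
proof -
  let ?X = "\<lambda>T. swap_vars i (ev (Suc i) (P T))"
  let ?S = "\<Sum>T\<in>Tab N lam. smult_mp (heckeB i T U) (?X T)"
  have e1: "ev i (opT N lam i P U) = smult_mp (1 - sK) (- ev i (P U) + ?X U) + ?S"
    using U by (simp add: opT_def ev_add ev_smult ev_sum ev_divdiff ev_swap)
  have "ev i (opTinv N lam i P U) = smult_mp (inverse sK) (smult_mp (1 - sK) (- ev i (P U) + ?X U) + ?S + smult_mp (1 - sK) (ev i (P U)))"
    by (simp add: opTinv_def ev_smult ev_add e1)
  also have "\<dots> = smult_mp (inverse sK) (?S + smult_mp (1 - sK) (?X U))"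
    by (simp add: algebra_simps)
  also have "\<dots> = (\<Sum>T\<in>Tab N lam. smult_mp (tinv i T U) (?X T))"
  proof -
    have "(\<Sum>T\<in>Tab N lam. smult_mp (tinv i T U) (?X T))
       = smult_mp (inverse sK) (?S + (\<Sum>T\<in>Tab N lam. smult_mp (if T = U then 1 - sK else 0) (?X T)))"
      by (simp add: tinv_def smult_mp_sum sum.distrib smult_mp_add2 flip: smult_mp_smult)
         (rule sum.cong, auto)
    also have "\<dots> = smult_mp (inverse sK) (?S + smult_mp (1 - sK) (?X U))"
      using msum_delta[OF finite_Tab U] by simp
    finally show ?thesis by simp
  qed
  finally show ?thesis .
qed

definition Rk :: "nat \<Rightarrow> nat list \<Rightarrow> melt \<Rightarrow> nat \<Rightarrow> melt" where
  "Rk N lam P k = fold (opTinv N lam) (rev [k..<N]) P"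
definition Ck :: "nat \<Rightarrow> nat list \<Rightarrow> tableau \<Rightarrow> nat \<Rightarrow> vec" where
  "Ck N lam T k = fold (vinv N lam) (rev [k..<N]) (basis_vec T)"

lemma Ck_supp: "T \<in> Tab N lam \<Longrightarrow> 1 \<le> k \<Longrightarrow> supp N lam (Ck N lam T k)"
  unfolding Ck_def by (rule fold_vinv_supp[OF basis_supp]) auto

lemma chain:
  assumes P: "inM N lam P" and k: "1 \<le> k" "k \<le> N"
  shows "inM N lam (Rk N lam P k) \<and> (\<forall>U\<in>Tab N lam. ev k (Rk N lam P k U) =
     (\<Sum>T\<in>Tab N lam. smult_mp (Ck N lam T k U) (sig N k (ev N (P T)))))"
  using k(2,1)
proof (induction k rule: inc_induct)
  case base
  have "ev N (P U) = (\<Sum>T\<in>Tab N lam. smult_mp (basis_vec T U) (ev N (P T)))" if U: "U \<in> Tab N lam" for U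
    using msum_delta[OF finite_Tab U, of 1 "\<lambda>T. ev N (P T)"]
    by (simp add: basis_vec_def eq_commute[of _ U])
  then show ?case using P by (simp add: Rk_def Ck_def sig_N)
next
  case (step n)
  have n: "1 \<le> n" "n < N" using step by auto
  have IH: "inM N lam (Rk N lam P (Suc n))"
    "\<And>U. U \<in> Tab N lam \<Longrightarrow> ev (Suc n) (Rk N lam P (Suc n) U) =
     (\<Sum>T\<in>Tab N lam. smult_mp (Ck N lam T (Suc n) U) (sig N (Suc n) (ev N (P T))))"
    using step by auto
  have Rn: "Rk N lam P n = opTinv N lam n (Rk N lam P (Suc n))"
    using n by (simp add: Rk_def upt_conv_Cons)
  have Cn: "Ck N lam T n = vinv N lam n (Ck N lam T (Suc n))" for T
    using n by (simp add: Ck_def upt_conv_Cons)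
  let ?Y = "\<lambda>T. sig N (Suc n) (ev N (P T))"
  let ?S = "Tab N lam"
  have "ev n (Rk N lam P n U) = (\<Sum>T\<in>?S. smult_mp (Ck N lam T n U) (sig N n (ev N (P T))))"
    if U: "U \<in> ?S" for U
  proof -
    have "ev n (Rk N lam P n U) = (\<Sum>W\<in>?S. smult_mp (tinv n W U) (swap_vars n (ev (Suc n) (Rk N lam P (Suc n) W))))"
      unfolding Rn by (rule ev_opTinv[OF IH(1) U])
    also have "\<dots> = (\<Sum>W\<in>?S. smult_mp (tinv n W U) (swap_vars n (\<Sum>T\<in>?S. smult_mp (Ck N lam T (Suc n) W) (?Y T))))"
      by (rule sum.cong) (auto simp: IH(2))
    also have "\<dots> = (\<Sum>W\<in>?S. \<Sum>T\<in>?S. smult_mp (Ck N lam T (Suc n) W * tinv n W U) (swap_vars n (?Y T)))"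
      by (simp add: swap_sum swap_smult smult_mp_sum mult.commute)
    also have "\<dots> = (\<Sum>T\<in>?S. \<Sum>W\<in>?S. smult_mp (Ck N lam T (Suc n) W * tinv n W U) (swap_vars n (?Y T)))"
      by (rule sum.swap)
    also have "\<dots> = (\<Sum>T\<in>?S. smult_mp (\<Sum>W\<in>?S. Ck N lam T (Suc n) W * tinv n W U) (swap_vars n (?Y T)))"
      by (simp add: smult_mp_sum2)
    also have "\<dots> = (\<Sum>T\<in>?S. smult_mp (Ck N lam T n U) (sig N n (ev N (P T))))"
    proof (rule sum.cong)
      fix T assume T: "T \<in> ?S"
      have "(\<Sum>W\<in>?S. Ck N lam T (Suc n) W * tinv n W U) = Ck N lam T n U"
        unfolding Cn by (rule vinv_tinv[symmetric]) (rule Ck_supp[OF T], simp)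
      then show "smult_mp (\<Sum>W\<in>?S. Ck N lam T (Suc n) W * tinv n W U) (swap_vars n (?Y T))
          = smult_mp (Ck N lam T n U) (sig N n (ev N (P T)))"
        using n by (simp add: sig_step)
    qed simp
    finally show ?thesis .
  qed
  moreover have "inM N lam (Rk N lam P n)" unfolding Rn by (rule opTinv_inM[OF IH(1) n])
  ultimately show ?case by blast
qed

lemma fold_vact_supp:
  "xs \<noteq> [] \<Longrightarrow> (\<And>x. x \<in> set xs \<Longrightarrow> 1 \<le> x \<and> x < N) \<Longrightarrow> supp N lam (fold (vact N lam) xs v)"
proof (induction xs arbitrary: v)
  case Nil then show ?case by simp
next
  case (Cons x xs)
  show ?case
  proof (cases "xs = []")
    case True then show ?thesis using Cons.prems by (simp add: vact_supp)
  next
    case False then show ?thesis using Cons by simp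
  qed
qed

definition quot :: "nat \<Rightarrow> mpoly \<Rightarrow> mpoly" where
  "quot N = lin (\<lambda>a. if Poly_Mapping.lookup a N = 0 then 0 else mon (a - Poly_Mapping.single N 1))"

lemma quot_eq: "Var N * quot N p = p - ev N p"
proof -
  have "Var N * quot N p = lin (\<lambda>a. Var N * (if Poly_Mapping.lookup a N = 0 then 0 else mon (a - Poly_Mapping.single N 1))) p"
    by (simp add: quot_def lin_gmult)
  also have "\<dots> = lin (\<lambda>a. mon a - (if Poly_Mapping.lookup a N = 0 then mon a else 0)) p"
  proof (rule lin_cong)
    fix a :: "nat \<Rightarrow>\<^sub>0 nat"
    show "Var N * (if Poly_Mapping.lookup a N = 0 then 0 else mon (a - Poly_Mapping.single N 1)) =
          mon a - (if Poly_Mapping.lookup a N = 0 then mon a else 0)"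
    proof (cases "Poly_Mapping.lookup a N = 0")
      case False
      have "Poly_Mapping.single N 1 + (a - Poly_Mapping.single N 1) = a"
        by (rule poly_mapping_eqI) (use False in \<open>auto simp: lookup_add lookup_minus lookup_single when_def\<close>)
      then show ?thesis using False by (simp add: Var_mon flip: mon_add)
    qed simp
  qed
  also have "\<dots> = p - ev N p" by (simp add: lin_gdiff lin_expansion_mon ev_def)
  finally show ?thesis .
qed

lemma in_vars_quot: "in_vars N p \<Longrightarrow> in_vars N (quot N p)"
  unfolding quot_def
proof (rule in_vars_lin)
  fix a assume p: "in_vars N p" and a: "a \<in> Poly_Mapping.keys p"
  have "Poly_Mapping.keys (a - Poly_Mapping.single N 1) \<subseteq> Poly_Mapping.keys a"
    by (auto simp: in_keys_iff lookup_minus)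
  moreover have "Poly_Mapping.keys a \<subseteq> {1..N}" using p a unfolding in_vars_def by blast
  ultimately have "in_vars N (mon (a - Poly_Mapping.single N 1))" unfolding in_vars_mon by blast
  then show "in_vars N (if Poly_Mapping.lookup a N = 0 then 0 else mon (a - Poly_Mapping.single N 1))"
    by simp
qed

theorem proposition3p3:
  fixes N :: nat and lam :: "nat list" and P :: melt
  assumes "N \<ge> 2"
    and "is_partition N lam"
    and "inM N lam P"
  shows "\<exists>Q. inM N lam Q \<and> opF N lam P = (\<lambda>U. Var N * Q U)"
proof -
  note N = assms(1) and P = assms(3)
  have PU: "in_vars N (P U)" "U \<notin> Tab N lam \<Longrightarrow> P U = 0" for U using P by (auto simp: inM_def)
  let ?R = "Rk N lam P 1"
  have ch: "inM N lam ?R" "\<And>U. U \<in> Tab N lam \<Longrightarrow> ev 1 (?R U) =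
     (\<Sum>T\<in>Tab N lam. smult_mp (Ck N lam T 1 U) (sig N 1 (ev N (P T))))"
    using chain[OF P, of 1] N by auto
  have RU: "in_vars N (?R U)" for U using ch(1) by (simp add: inM_def)
  have Xi: "opXi N lam P = opW N lam ?R" by (simp add: opXi_def Rk_def)
  have vsupp: "vchain N lam (basis_vec T) U = 0" if "U \<notin> Tab N lam" for T U
    using fold_vact_supp[of "[1..<N]" N lam "basis_vec T"] N that by (simp add: vchain_def supp_def)
  have evXi: "ev N (opXi N lam P U) = ev N (P U)" if U: "U \<in> Tab N lam" for U
  proof -
    let ?S = "Tab N lam"
    have w2: "\<And>T. ev N (wsubst N (?R T)) = wsubst N (ev 1 (?R T))" by (rule W2[OF N RU])
    have "ev N (opXi N lam P U) = (\<Sum>T\<in>?S. smult_mp (vchain N lam (basis_vec T) U) (ev N (wsubst N (?R T))))"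
      by (simp add: Xi opW_def ev_sum ev_smult)
    also have "\<dots> = (\<Sum>T\<in>?S. smult_mp (vchain N lam (basis_vec T) U) (wsubst N (ev 1 (?R T))))"
      by (simp only: w2)
    also have "\<dots> = (\<Sum>T\<in>?S. \<Sum>T'\<in>?S. smult_mp (Ck N lam T' 1 T * vchain N lam (basis_vec T) U) (ev N (P T')))"
    proof (rule sum.cong)
      fix T assume T: "T \<in> ?S"
      have e: "wsubst N (ev 1 (?R T)) = (\<Sum>T'\<in>?S. smult_mp (Ck N lam T' 1 T) (ev N (P T')))"
        by (simp only: ch(2)[OF T] wsubst_sum wsubst_smult W1[OF N PU(1)])
      show "smult_mp (vchain N lam (basis_vec T) U) (wsubst N (ev 1 (?R T))) =
        (\<Sum>T'\<in>?S. smult_mp (Ck N lam T' 1 T * vchain N lam (basis_vec T) U) (ev N (P T')))"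
        unfolding e by (simp add: smult_mp_sum mult.commute)
    qed simp
    also have "\<dots> = (\<Sum>T'\<in>?S. \<Sum>T\<in>?S. smult_mp (Ck N lam T' 1 T * vchain N lam (basis_vec T) U) (ev N (P T')))"
      by (rule sum.swap)
    also have "\<dots> = (\<Sum>T'\<in>?S. smult_mp (vchain N lam (Ck N lam T' 1) U) (ev N (P T')))"
      by (rule sum.cong) (simp_all add: vchain_lin[OF Ck_supp] smult_mp_sum2)
    also have "\<dots> = (\<Sum>T'\<in>?S. smult_mp (basis_vec T' U) (ev N (P T')))"
    proof (rule sum.cong)
      fix T' assume T': "T' \<in> ?S"
      have "vchain N lam (Ck N lam T' 1) = basis_vec T'"
        unfolding vchain_def Ck_def using fold_cancel[of 1 N lam "basis_vec T'"] basis_supp[OF T'] N by simp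
      then show "smult_mp (vchain N lam (Ck N lam T' 1) U) (ev N (P T')) = smult_mp (basis_vec T' U) (ev N (P T'))"
        by simp
    qed simp
    also have "\<dots> = ev N (P U)"
      using msum_delta[OF finite_Tab U, of 1 "\<lambda>T. ev N (P T)"]
      by (simp add: basis_vec_def eq_commute[of _ U])
    finally show ?thesis .
  qed
  have XiV: "in_vars N (opXi N lam P U)" for U
    unfolding Xi opW_def using N RU
    by (auto intro!: in_vars_sum in_vars_smult in_vars_wsubst)
  have Fout: "opF N lam P U = 0" if "U \<notin> Tab N lam" for U
    using that by (simp add: opF_def Xi opW_def vsupp PU(2))
  have evF: "ev N (opF N lam P U) = 0" for U
  proof (cases "U \<in> Tab N lam")
    case True then show ?thesis by (simp add: opF_def ev_diff evXi)
  next
    case False then show ?thesis by (simp add: Fout)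
  qed
  define Q where "Q = (\<lambda>U. quot N (opF N lam P U))"
  have FV: "in_vars N (opF N lam P U)" for U
    unfolding opF_def using in_vars_diff[OF PU(1) XiV] .
  have "inM N lam Q"
    unfolding inM_def Q_def using Fout in_vars_quot[OF FV] by (simp add: quot_def)
  moreover have "opF N lam P = (\<lambda>U. Var N * Q U)"
    by (rule ext) (simp add: Q_def quot_eq evF)
  ultimately show ?thesis by blast
qed


end
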